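(* Let $d\ge 2$ and assume that for every positive integer $d'<d$, every simple $d'$-polytope with $2d'$ facets has (graph) diameter at most $d'$. Let $D$ be a Dantzig figure of dimension $d$ with distinguished vertices $x,y$, and suppose every facet of $D$ has at most $2d-2$ facets of its own (i.e. at most $2d-2$ of the $(d-2)$-faces of $D$ are contained in it). Then the distance between $x$ and $y$ in the edge-vertex graph of $D$ is at most $d$.
   Context: A Dantzig figure of dimension $d$ is a simple $d$-polytope with exactly $2d$ facets together with two vertices $x,y$ that lie on no common facet. A $d$-polytope is simple if every vertex lies in exactly $d$ facets. The diameter of a polytope is the maximum over pairs of vertices of the shortest-path distance in its edge-vertex graph (vertices and edges of the polytope). *)

theory Defs
  imports "HOL-Analysis.Analysis"
begin

definition poly_adj :: "'a::euclidean_space set \<Rightarrow> 'a \<Rightarrow> 'a \<Rightarrow> bool" where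
  "poly_adj P u v \<longleftrightarrow> u \<noteq> v \<and> u extreme_point_of P \<and> v extreme_point_of P
      \<and> closed_segment u v edge_of P"

definition poly_path :: "'a::euclidean_space set \<Rightarrow> 'a list \<Rightarrow> bool" where
  "poly_path P xs \<longleftrightarrow> xs \<noteq> [] \<and> (\<forall>z\<in>set xs. z extreme_point_of P)
      \<and> (\<forall>i. Suc i < length xs \<longrightarrow> poly_adj P (xs ! i) (xs ! Suc i))"

definition poly_dist :: "'a::euclidean_space set \<Rightarrow> 'a \<Rightarrow> 'a \<Rightarrow> nat" where
  "poly_dist P u v = (LEAST n. \<exists>xs. poly_path P xs \<and> hd xs = u \<and> last xs = v \<and> length xs = Suc n)"

definition poly_diameter :: "'a::euclidean_space set \<Rightarrow> nat" where
  "poly_diameter P = Sup {poly_dist P u v | u v. u extreme_point_of P \<and> v extreme_point_of P}"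

definition simple_polytope :: "'a::euclidean_space set \<Rightarrow> nat \<Rightarrow> bool" where
  "simple_polytope P d \<longleftrightarrow> polytope P \<and> aff_dim P = int d
      \<and> (\<forall>v. v extreme_point_of P \<longrightarrow> card {F. F facet_of P \<and> v \<in> F} = d)"

definition dantzig_figure :: "'a::euclidean_space set \<Rightarrow> nat \<Rightarrow> 'a \<Rightarrow> 'a \<Rightarrow> bool" where
  "dantzig_figure P d x y \<longleftrightarrow> simple_polytope P d \<and> card {F. F facet_of P} = 2 * d
      \<and> x extreme_point_of P \<and> y extreme_point_of P
      \<and> \<not> (\<exists>F. F facet_of P \<and> x \<in> F \<and> y \<in> F)"

end

theory Submission
  imports Defs
begin

inductive walk :: "'a::euclidean_space set \<Rightarrow> 'a \<Rightarrow> 'a \<Rightarrow> nat \<Rightarrow> bool" for P where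
  wnil: "u extreme_point_of P \<Longrightarrow> walk P u u 0"
| wcons: "poly_adj P u w \<Longrightarrow> walk P w v n \<Longrightarrow> walk P u v (Suc n)"

lemma walk_vert: "walk P u v n \<Longrightarrow> u extreme_point_of P \<and> v extreme_point_of P"
  by (induction rule: walk.induct) (auto simp: poly_adj_def)

lemma walk_trans: "walk P u w m \<Longrightarrow> walk P w v n \<Longrightarrow> walk P u v (m + n)"
  by (induction rule: walk.induct) (auto intro: walk.intros)

lemma poly_adj_sym: "poly_adj P u v \<Longrightarrow> poly_adj P v u"
  by (auto simp: poly_adj_def closed_segment_commute)

lemma walk_edge: "poly_adj P u v \<Longrightarrow> walk P u v 1"
  using wcons[of P u v v 0] wnil[of v P] by (auto simp: poly_adj_def)

lemma walk_path: "walk P u v n \<Longrightarrow> \<exists>xs. poly_path P xs \<and> hd xs = u \<and> last xs = v \<and> length xs = Suc n"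
proof (induction rule: walk.induct)
  case (wnil u)
  then show ?case by (intro exI[of _ "[u]"]) (auto simp: poly_path_def)
next
  case (wcons u w v n)
  then obtain xs where xs: "poly_path P xs" "hd xs = w" "last xs = v" "length xs = Suc n" by blast
  have ne: "xs \<noteq> []" using xs by auto
  have "poly_path P (u # xs)"
    unfolding poly_path_def
  proof (intro conjI allI impI)
    show "\<forall>z\<in>set (u # xs). z extreme_point_of P" using xs wcons.hyps by (auto simp: poly_path_def poly_adj_def)
    fix i assume i: "Suc i < length (u # xs)"
    show "poly_adj P ((u # xs) ! i) ((u # xs) ! Suc i)"
    proof (cases i)
      case 0 then show ?thesis using wcons.hyps xs ne by (simp add: hd_conv_nth)
    next
      case (Suc j) then show ?thesis using xs i by (auto simp: poly_path_def)
    qed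
  qed simp
  then show ?case using xs ne by (intro exI[of _ "u # xs"]) auto
qed

lemma path_walk: "poly_path P xs \<Longrightarrow> walk P (hd xs) (last xs) (length xs - 1)"
proof (induction xs)
  case Nil then show ?case by (simp add: poly_path_def)
next
  case (Cons a xs)
  show ?case
  proof (cases "xs = []")
    case True then show ?thesis using Cons.prems by (auto simp: poly_path_def intro: wnil)
  next
    case False
    have pp: "poly_path P xs" using Cons.prems False unfolding poly_path_def
      by auto
    have "poly_adj P a (hd xs)" using Cons.prems False unfolding poly_path_def
      by (metis hd_conv_nth length_Cons length_greater_0_conv nth_Cons_0 nth_Cons_Suc Suc_less_eq)
    from wcons[OF this Cons.IH[OF pp]] show ?thesis using False by auto
  qed
qed

lemma walk_dist: "walk P u v n \<Longrightarrow> poly_dist P u v \<le> n"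
  unfolding poly_dist_def using walk_path by (metis (mono_tags, lifting) Least_le)

lemma walk_dist_walk: assumes "walk P u v n" shows "walk P u v (poly_dist P u v)"
proof -
  have "\<exists>n. \<exists>xs. poly_path P xs \<and> hd xs = u \<and> last xs = v \<and> length xs = Suc n"
    using walk_path[OF assms] by blast
  then have "\<exists>xs. poly_path P xs \<and> hd xs = u \<and> last xs = v \<and> length xs = Suc (poly_dist P u v)"
    unfolding poly_dist_def by (rule LeastI_ex)
  then show ?thesis using path_walk by fastforce
qed

lemma walk_face: "walk F u v n \<Longrightarrow> F face_of P \<Longrightarrow> walk P u v n"
proof (induction rule: walk.induct)
  case (wnil u) then show ?case by (auto intro!: walk.wnil simp: extreme_point_of_face)
next
  case (wcons u w v n)
  have "poly_adj P u w" using wcons by (auto simp: poly_adj_def extreme_point_of_face edge_of_def intro: face_of_trans)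
  then show ?case using wcons by (auto intro: walk.wcons)
qed


lemma ext_face1: "F face_of S \<Longrightarrow> v extreme_point_of S \<Longrightarrow> v \<in> F \<Longrightarrow> v extreme_point_of F"
  by (simp add: extreme_point_of_face)
lemma ext_face2: "F face_of S \<Longrightarrow> v extreme_point_of F \<Longrightarrow> v extreme_point_of S"
  by (simp add: extreme_point_of_face)

lemma seg_lemma:
  fixes S :: "'a::euclidean_space set"
  assumes "compact S" "convex S" "aff_dim S = 1" "u \<noteq> v"
    "u extreme_point_of S" "v extreme_point_of S"
  shows "S = closed_segment u v"
proof -
  have col: "collinear S" using assms(3) by (simp add: collinear_aff_dim)
  have uS: "u \<in> S" and vS: "v \<in> S" using assms(5,6) by (auto simp: extreme_point_of_def)
  have ext: "w = u \<or> w = v" if w: "w extreme_point_of S" for w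
  proof (rule ccontr)
    assume nw: "\<not> (w = u \<or> w = v)"
    have wS: "w \<in> S" using w by (auto simp: extreme_point_of_def)
    have "collinear {u, v, w}" using col uS vS wS by (auto intro: collinear_subset)
    then have "between (v, w) u \<or> between (w, u) v \<or> between (u, v) w"
      by (simp add: collinear_between_cases)
    then show False
    proof (elim disjE)
      assume "between (v, w) u"
      then have "u \<in> open_segment v w" using nw assms(4)
        by (auto simp: between_mem_segment open_segment_def)
      then show False using assms(5) vS wS by (auto simp: extreme_point_of_def)
    next
      assume "between (w, u) v"
      then have "v \<in> open_segment w u" using nw assms(4)
        by (auto simp: between_mem_segment open_segment_def)
      then show False using assms(6) uS wS by (auto simp: extreme_point_of_def)
    next
      assume "between (u, v) w"
      then have "w \<in> open_segment u v" using nw assms(4)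
        by (auto simp: between_mem_segment open_segment_def)
      then show False using w uS vS by (auto simp: extreme_point_of_def)
    qed
  qed
  have "S = convex hull {x. x extreme_point_of S}"
    using assms(1,2) by (rule Krein_Milman_Minkowski)
  also have "\<dots> \<subseteq> convex hull {u, v}" using ext by (intro hull_mono) auto
  finally have "S \<subseteq> closed_segment u v" by (simp add: segment_convex_hull)
  moreover have "closed_segment u v \<subseteq> S" using assms(2) uS vS by (simp add: closed_segment_subset)
  ultimately show ?thesis by blast
qed

lemma vertex_in_facet:
  fixes P :: "'a::euclidean_space set"
  assumes "polytope P" "aff_dim P > 0" "v extreme_point_of P"
  obtains G where "G facet_of P" "v \<in> G"
proof -
  have "{v} face_of P" using assms(3) by (simp add: face_of_singleton)
  moreover have "{v} \<noteq> P" using assms(2) by auto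
  ultimately obtain G where "G facet_of P" "{v} \<subseteq> G"
    using face_of_polyhedron_subset_facet[of P "{v}"] assms(1) polytope_imp_polyhedron by blast
  then show ?thesis using that by auto
qed

lemma edge_exists:
  fixes P :: "'a::euclidean_space set"
  shows "polytope P \<Longrightarrow> aff_dim P = int (Suc k) \<Longrightarrow> v extreme_point_of P \<Longrightarrow> \<exists>e. e edge_of P \<and> v \<in> e"
proof (induction k arbitrary: P)
  case 0
  then show ?case
    by (intro exI[of _ P]) (auto simp: edge_of_def face_of_refl polytope_imp_convex extreme_point_of_def)
next
  case (Suc k)
  obtain G where G: "G facet_of P" "v \<in> G" using vertex_in_facet[of P v] Suc.prems by auto
  have "polytope G" using G Suc.prems face_of_polytope_polytope facet_of_imp_face_of by blast
  moreover have "aff_dim G = int (Suc k)" using G Suc.prems by (auto simp: facet_of_def)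
  moreover have "v extreme_point_of G" using ext_face1[OF facet_of_imp_face_of[OF G(1)] Suc.prems(3) G(2)] .
  ultimately obtain e where "e edge_of G" "v \<in> e" using Suc.IH by blast
  then show ?case using G face_of_trans[OF _ facet_of_imp_face_of[OF G(1)]] by (auto simp: edge_of_def)
qed

lemma neighbor_exists:
  fixes P :: "'a::euclidean_space set"
  assumes "polytope P" "aff_dim P > 0" "v extreme_point_of P"
  shows "\<exists>w. poly_adj P v w"
proof -
  define k where "k = nat (aff_dim P) - 1"
  have k: "aff_dim P = int (Suc k)" using assms(2) unfolding k_def by simp
  obtain e where e: "e edge_of P" "v \<in> e" using edge_exists[OF assms(1) k assms(3)] by blast
  have ef: "e face_of P" and ed: "aff_dim e = 1" using e by (auto simp: edge_of_def)
  have pe: "polytope e" using ef assms(1) face_of_polytope_polytope by blast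
  have ve: "v extreme_point_of e" using ext_face1[OF ef assms(3) e(2)] .
  have "\<exists>w. w extreme_point_of e \<and> w \<noteq> v"
  proof (rule ccontr)
    assume "\<not> ?thesis"
    then have eq1: "{x. x extreme_point_of e} = {v}" using ve by blast
    have eq2: "e = convex hull {x. x extreme_point_of e}"
      by (rule Krein_Milman_Minkowski) (use pe polytope_imp_compact polytope_imp_convex in auto)
    have "e = convex hull {v}" using eq2 unfolding eq1 .
    then have "e = {v}" by simp
    then show False using ed by simp
  qed
  then obtain w where w: "w extreme_point_of e" "w \<noteq> v" by blast
  have ce: "compact e" "convex e" using pe polytope_imp_compact polytope_imp_convex by auto
  have "e = closed_segment v w"
    using seg_lemma[OF ce ed _ ve w(1)] w(2) by blast
  moreover have "w extreme_point_of P" using ext_face2[OF ef w(1)] .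
  ultimately have "poly_adj P v w" using w(2) e(1) assms(3)
    unfolding poly_adj_def by auto
  then show ?thesis by blast
qed

lemma facet_of_face_explicit:
  fixes P :: "'a::euclidean_space set"
  assumes "polytope P" "F face_of P" "E facet_of F"
  shows "\<exists>H. H facet_of P \<and> \<not> F \<subseteq> H \<and> E = F \<inter> H"
proof -
  have EP: "E face_of P" using assms face_of_trans facet_of_imp_face_of by blast
  have Ene: "E \<noteq> {}" using assms(3) by (simp add: facet_of_def)
  have EsubF: "E \<subseteq> F" using assms(3) facet_of_imp_subset by blast
  have cF: "convex F" using assms(2) face_of_imp_convex by blast
  have dE: "aff_dim E = aff_dim F - 1" using assms(3) by (simp add: facet_of_def)
  have "E \<noteq> P" using dE aff_dim_subset[OF face_of_imp_subset[OF assms(2)]] by auto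
  then have Eeq: "E = \<Inter>{H. H facet_of P \<and> E \<subseteq> H}"
    using face_of_polyhedron[OF polytope_imp_polyhedron[OF assms(1)] EP Ene] by blast
  have "\<exists>H. H facet_of P \<and> E \<subseteq> H \<and> \<not> F \<subseteq> H"
  proof (rule ccontr)
    assume "\<not> ?thesis"
    then have "F \<subseteq> E" using Eeq by (subst Eeq) blast
    then have "E = F" using EsubF by blast
    then show False using dE by simp
  qed
  then obtain H where H: "H facet_of P" "E \<subseteq> H" "\<not> F \<subseteq> H" by blast
  have FH: "(F \<inter> H) face_of F"
    using face_of_Int[OF assms(2) facet_of_imp_face_of[OF H(1)]] face_of_subset[of "F \<inter> H" P F] assms(2)
      face_of_imp_subset by blast
  have "F \<inter> H \<noteq> F" using H(3) by blast
  then have lt: "aff_dim (F \<inter> H) < aff_dim F" using face_of_aff_dim_lt[OF cF FH] by blast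
  have EFH: "E face_of (F \<inter> H)" using face_of_subset[of E F "F \<inter> H"] assms(3) facet_of_imp_face_of EsubF H(2)
    by blast
  have "E = F \<inter> H"
  proof (rule ccontr)
    assume "E \<noteq> F \<inter> H"
    then have "aff_dim E < aff_dim (F \<inter> H)"
      using face_of_aff_dim_lt[OF face_of_imp_convex[OF FH] EFH] by blast
    then show False using lt dE by simp
  qed
  then show ?thesis using H by blast
qed

lemma facet_map:
  fixes P :: "'a::euclidean_space set"
  assumes "polytope P" "G facet_of P"
  obtains f where "\<And>E. E facet_of G \<Longrightarrow> f E facet_of P \<and> f E \<noteq> G \<and> E = G \<inter> f E"
proof -
  have "\<forall>E. \<exists>H. E facet_of G \<longrightarrow> H facet_of P \<and> \<not> G \<subseteq> H \<and> E = G \<inter> H"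
    using facet_of_face_explicit[OF assms(1) facet_of_imp_face_of[OF assms(2)]] by blast
  then obtain f where "\<And>E. E facet_of G \<Longrightarrow> f E facet_of P \<and> \<not> G \<subseteq> f E \<and> E = G \<inter> f E" by metis
  then show ?thesis using that by blast
qed

lemma facets_of_facet_count:
  fixes P :: "'a::euclidean_space set"
  assumes "polytope P" "G facet_of P"
    and that: "\<And>E H. E facet_of G \<Longrightarrow> H facet_of P \<Longrightarrow> E = G \<inter> H \<Longrightarrow> Q E \<Longrightarrow> Q' H"
  shows "card {E. E facet_of G \<and> Q E} \<le> card ({H. H facet_of P \<and> Q' H} - {G})"
proof -
  obtain f where f: "\<And>E. E facet_of G \<Longrightarrow> f E facet_of P \<and> f E \<noteq> G \<and> E = G \<inter> f E"
    using facet_map[OF assms(1,2)] by blast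
  show ?thesis
  proof (rule card_inj_on_le[of f])
    show "inj_on f {E. E facet_of G \<and> Q E}"
    proof (rule inj_onI)
      fix E1 E2 assume "E1 \<in> {E. E facet_of G \<and> Q E}" "E2 \<in> {E. E facet_of G \<and> Q E}" "f E1 = f E2"
      then show "E1 = E2" using f[of E1] f[of E2] by simp
    qed
    show "f ` {E. E facet_of G \<and> Q E} \<subseteq> {H. H facet_of P \<and> Q' H} - {G}" using f that by auto
    show "finite ({H. H facet_of P \<and> Q' H} - {G})"
      using finite_polyhedron_facets[OF polytope_imp_polyhedron[OF assms(1)]] by (auto intro: finite_subset)
  qed
qed


lemma facet_polytope: "polytope P \<Longrightarrow> G facet_of P \<Longrightarrow> polytope G"
  using face_of_polytope_polytope facet_of_imp_face_of by blast

lemma ext_facet: "G facet_of P \<Longrightarrow> v extreme_point_of P \<Longrightarrow> v \<in> G \<Longrightarrow> v extreme_point_of G"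
  using ext_face1[OF facet_of_imp_face_of] by blast

lemma ext_facet2: "G facet_of P \<Longrightarrow> v extreme_point_of G \<Longrightarrow> v extreme_point_of P \<and> v \<in> G"
  using ext_face2[OF facet_of_imp_face_of] by (auto simp: extreme_point_of_def)

lemma finite_facets: "polytope P \<Longrightarrow> finite {F. F facet_of P}"
  using finite_polyhedron_facets polytope_imp_polyhedron by blast

lemma finite_facets_P: assumes "polytope P" shows "finite {F. F facet_of P \<and> Q F}"
  by (rule finite_subset[OF _ finite_facets[OF assms]]) auto

lemma vertex_facets_ge:
  fixes P :: "'a::euclidean_space set"
  shows "polytope P \<Longrightarrow> aff_dim P = int k \<Longrightarrow> v extreme_point_of P \<Longrightarrow> k \<le> card {F. F facet_of P \<and> v \<in> F}"
proof (induction k arbitrary: P)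
  case 0 then show ?case by simp
next
  case (Suc k)
  obtain G where G: "G facet_of P" "v \<in> G" using vertex_in_facet[of P v] Suc.prems by auto
  have "polytope G" using G(1) Suc.prems facet_polytope by blast
  moreover have "aff_dim G = int k" using G Suc.prems by (auto simp: facet_of_def)
  moreover have "v extreme_point_of G" using ext_facet G Suc.prems by blast
  ultimately have "k \<le> card {E. E facet_of G \<and> v \<in> E}" using Suc.IH by blast
  also have "\<dots> \<le> card ({H. H facet_of P \<and> v \<in> H} - {G})"
    by (rule facets_of_facet_count[OF Suc.prems(1) G(1)]) auto
  also have "\<dots> = card {H. H facet_of P \<and> v \<in> H} - 1"
    using G by (simp add: card_Diff_singleton)
  finally have "k \<le> card {H. H facet_of P \<and> v \<in> H} - 1" .
  moreover have "card {H. H facet_of P \<and> v \<in> H} > 0"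
    using G finite_facets_P[OF Suc.prems(1)] card_gt_0_iff by blast
  ultimately show ?case by linarith
qed

lemma simple_facet:
  fixes P :: "'a::euclidean_space set"
  assumes "simple_polytope P k" "G facet_of P"
  shows "simple_polytope G (k - 1) \<and> k \<ge> 1"
proof -
  have pP: "polytope P" and dP: "aff_dim P = int k"
    and sP: "\<And>v. v extreme_point_of P \<Longrightarrow> card {F. F facet_of P \<and> v \<in> F} = k"
    using assms(1) by (auto simp: simple_polytope_def)
  have pG: "polytope G" using facet_polytope pP assms(2) by blast
  have "G \<noteq> {}" using assms(2) by (simp add: facet_of_def)
  then have "aff_dim G \<ge> 0" using aff_dim_empty[of G] aff_dim_geq[of G] by linarith
  moreover have dG0: "aff_dim G = int k - 1" using assms(2) dP by (simp add: facet_of_def)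
  ultimately have k1: "k \<ge> 1" by linarith
  then have dG: "aff_dim G = int (k - 1)" using dG0 by simp
  have "card {E. E facet_of G \<and> v \<in> E} = k - 1" if v: "v extreme_point_of G" for v
  proof (rule antisym)
    have vP: "v extreme_point_of P" "v \<in> G" using ext_facet2[OF assms(2) v] by auto
    have "card {E. E facet_of G \<and> v \<in> E} \<le> card ({H. H facet_of P \<and> v \<in> H} - {G})"
      by (rule facets_of_facet_count[OF pP assms(2)]) auto
    also have "\<dots> = k - 1" using vP assms(2) sP by (simp add: card_Diff_singleton)
    finally show "card {E. E facet_of G \<and> v \<in> E} \<le> k - 1" .
    show "k - 1 \<le> card {E. E facet_of G \<and> v \<in> E}"
      using vertex_facets_ge[OF pG dG v] .
  qed
  then show ?thesis using pG dG k1 by (simp add: simple_polytope_def)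
qed

lemma facet_count_facet:
  fixes P :: "'a::euclidean_space set"
  assumes "polytope P" "G facet_of P"
  shows "card {E. E facet_of G} \<le> card {H. H facet_of P} - 1"
proof -
  have "card {E. E facet_of G \<and> True} \<le> card ({H. H facet_of P \<and> True} - {G})"
    by (rule facets_of_facet_count[OF assms]) auto
  then show ?thesis using assms(2) by (simp add: card_Diff_singleton)
qed

lemma aff_dim_nonneg: "x \<in> S \<Longrightarrow> aff_dim S \<ge> 0"
  using aff_dim_empty[of S] aff_dim_geq[of S] by fastforce

lemma connected_walk:
  fixes P :: "'a::euclidean_space set"
  shows "polytope P \<Longrightarrow> u extreme_point_of P \<Longrightarrow> v extreme_point_of P \<Longrightarrow> \<exists>n. walk P u v n"
proof (induction "nat (aff_dim P)" arbitrary: P u v rule: less_induct)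
  case less
  have uP: "u \<in> P" and vP: "v \<in> P" using less.prems by (auto simp: extreme_point_of_def)
  have ge0: "aff_dim P \<ge> 0" using uP aff_dim_nonneg by blast
  consider "aff_dim P = 0" | "aff_dim P = 1" | "aff_dim P \<ge> 2" using ge0 by linarith
  then show ?case
  proof cases
    case 1
    then obtain a where "P = {a}" using aff_dim_eq_0 by blast
    then have "u = v" using uP vP by auto
    then show ?thesis using less.prems walk.wnil by blast
  next
    case 2
    show ?thesis
    proof (cases "u = v")
      case True then show ?thesis using less.prems walk.wnil by blast
    next
      case False
      have "P = closed_segment u v"
        using seg_lemma[of P u v] less.prems polytope_imp_compact polytope_imp_convex 2 False by blast
      then have "poly_adj P u v" using less.prems 2 False
        by (simp add: poly_adj_def edge_of_def face_of_refl polytope_imp_convex)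
      then show ?thesis using walk_edge by blast
    qed
  next
    case 3
    have IHP: "\<exists>n. walk P w z n" if F: "F facet_of P" and w: "w extreme_point_of P" "w \<in> F"
      and z: "z extreme_point_of P" "z \<in> F" for F w z
    proof -
      have "nat (aff_dim F) < nat (aff_dim P)" using F 3 by (simp add: facet_of_def)
      moreover have "polytope F" using F less.prems facet_polytope by blast
      ultimately obtain n where "walk F w z n"
        using less.hyps[of F w z] ext_facet[OF F] w z by blast
      then show ?thesis using walk_face facet_of_imp_face_of[OF F] by blast
    qed
    define R where "R = {F. F facet_of P \<and> (\<exists>w\<in>F. \<exists>n. walk P u w n)}"
    define N where "N = {F. F facet_of P} - R"
    have fin: "finite {F. F facet_of P}" using finite_facets less.prems by blast
    have clF: "closed F" if "F facet_of P" for F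
      using that less.prems facet_polytope polytope_imp_compact compact_imp_closed by blast
    have clR: "closed (\<Union>R)" using fin clF by (intro closed_Union) (auto simp: R_def intro: finite_subset)
    have clN: "closed (\<Union>N)" using fin clF by (intro closed_Union) (auto simp: N_def intro: finite_subset)
    have rf: "rel_frontier P = \<Union>R \<union> \<Union>N"
      using rel_frontier_of_polyhedron[OF polytope_imp_polyhedron[OF less.prems(1)]]
      by (auto simp: R_def N_def)
    have con: "connected (rel_frontier P)"
      using connected_sphere_gen[of P] less.prems(1) polytope_imp_convex polytope_imp_bounded 3 by auto
    have disj: "\<Union>R \<inter> \<Union>N = {}"
    proof (rule ccontr)
      assume "\<Union>R \<inter> \<Union>N \<noteq> {}"
      then obtain z F F' where z: "z \<in> F" "F \<in> R" "z \<in> F'" "F' \<in> N" by blast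
      have F: "F facet_of P" and F': "F' facet_of P" using z by (auto simp: R_def N_def)
      obtain w0 n where w0: "w0 \<in> F" "walk P u w0 n" using z(2) by (auto simp: R_def)
      let ?I = "F \<inter> F'"
      have IP: "?I face_of P" using F F' face_of_Int facet_of_imp_face_of by blast
      have "polytope ?I" using IP less.prems face_of_polytope_polytope by blast
      moreover have "?I \<noteq> {}" using z by blast
      ultimately obtain w where w: "w extreme_point_of ?I"
        using extreme_point_exists_convex[of ?I] polytope_imp_compact polytope_imp_convex by blast
      have wP: "w extreme_point_of P" "w \<in> F" "w \<in> F'"
        using ext_face2[OF IP w] w by (auto simp: extreme_point_of_def)
      have "w0 extreme_point_of P" using walk_vert[OF w0(2)] by blast
      then obtain m where "walk P w0 w m" using IHP[OF F] w0 wP by blast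
      then have "walk P u w (n + m)" using walk_trans w0 by blast
      then have "F' \<in> R" using F' wP by (auto simp: R_def)
      then show False using z by (auto simp: N_def)
    qed
    show ?thesis
    proof (rule ccontr)
      assume nw: "\<nexists>n. walk P u v n"
      obtain G where G: "G facet_of P" "u \<in> G" using vertex_in_facet[of P u] less.prems 3 by auto
      have "G \<in> R" using G less.prems walk.wnil by (auto simp: R_def)
      then have uR: "u \<in> \<Union>R" using G by blast
      obtain G' where G': "G' facet_of P" "v \<in> G'" using vertex_in_facet[of P v] less.prems 3 by auto
      have "G' \<notin> R"
      proof
        assume "G' \<in> R"
        then obtain w0 n where w0: "w0 \<in> G'" "walk P u w0 n" by (auto simp: R_def)
        have "w0 extreme_point_of P" using walk_vert[OF w0(2)] by blast
        then obtain m where "walk P w0 v m" using IHP[OF G'(1)] w0 G' less.prems by blast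
        then show False using walk_trans w0 nw by blast
      qed
      then have vN: "v \<in> \<Union>N" using G' by (auto simp: N_def)
      have "\<exists>A B. closed A \<and> closed B \<and> rel_frontier P \<subseteq> A \<union> B \<and> A \<inter> B \<inter> rel_frontier P = {}
         \<and> A \<inter> rel_frontier P \<noteq> {} \<and> B \<inter> rel_frontier P \<noteq> {}"
        using clR clN rf disj uR vN by (intro exI[of _ "\<Union>R"] exI[of _ "\<Union>N"]) auto
      then show False using con connected_closed by blast
    qed
  qed
qed


lemma dist_le_diam:
  fixes Q :: "'a::euclidean_space set"
  assumes "polytope Q" "u extreme_point_of Q" "v extreme_point_of Q"
  shows "poly_dist Q u v \<le> poly_diameter Q"
proof -
  let ?V = "{x. x extreme_point_of Q}"
  have fV: "finite ?V" using finite_polyhedron_extreme_points polytope_imp_polyhedron assms(1) by blast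
  have "{poly_dist Q u v |u v. u extreme_point_of Q \<and> v extreme_point_of Q}
      \<subseteq> (\<lambda>(a, b). poly_dist Q a b) ` (?V \<times> ?V)" by auto
  then have "finite {poly_dist Q u v |u v. u extreme_point_of Q \<and> v extreme_point_of Q}"
    using fV by (meson finite_SigmaI finite_imageI finite_subset)
  then show ?thesis unfolding poly_diameter_def
    by (rule le_cSup_finite) (use assms in blast)
qed

lemma kw:
  fixes Q :: "'a::euclidean_space set"
  assumes H: "\<forall>d' (Q :: 'a set). 0 < d' \<and> d' < d \<and> simple_polytope Q d'
           \<and> card {F. F facet_of Q} = 2 * d' \<longrightarrow> poly_diameter Q \<le> d'"
  shows "simple_polytope Q k \<Longrightarrow> k < d \<Longrightarrow> card {F. F facet_of Q} \<le> 2 * k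
     \<Longrightarrow> u extreme_point_of Q \<Longrightarrow> v extreme_point_of Q \<Longrightarrow> \<exists>n\<le>k. walk Q u v n"
proof (induction k arbitrary: Q u v)
  case 0
  have "aff_dim Q = 0" using "0.prems"(1) by (simp add: simple_polytope_def)
  then obtain a where "Q = {a}" using aff_dim_eq_0 by blast
  then have "u = v" using "0.prems"(4,5) by (auto simp: extreme_point_of_def)
  then show ?case using "0.prems"(4) walk.wnil by blast
next
  case (Suc k)
  have pQ: "polytope Q" and dQ: "aff_dim Q = int (Suc k)"
    and sQ: "\<And>v. v extreme_point_of Q \<Longrightarrow> card {F. F facet_of Q \<and> v \<in> F} = Suc k"
    using Suc.prems(1) by (auto simp: simple_polytope_def)
  show ?case
  proof (cases "card {F. F facet_of Q} = 2 * Suc k")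
    case True
    have "poly_diameter Q \<le> Suc k" using H Suc.prems True by blast
    moreover have "poly_dist Q u v \<le> poly_diameter Q" using dist_le_diam pQ Suc.prems by blast
    moreover obtain n where "walk Q u v n" using connected_walk pQ Suc.prems by blast
    then have "walk Q u v (poly_dist Q u v)" by (rule walk_dist_walk)
    ultimately show ?thesis by (meson order_trans)
  next
    case False
    then have lt: "card {F. F facet_of Q} < 2 * Suc k" using Suc.prems(3) by linarith
    let ?X = "{F. F facet_of Q \<and> u \<in> F}" and ?Y = "{F. F facet_of Q \<and> v \<in> F}"
    have "?X \<inter> ?Y \<noteq> {}"
    proof
      assume disj: "?X \<inter> ?Y = {}"
      have "card (?X \<union> ?Y) = card ?X + card ?Y"
        using disj finite_facets_P[OF pQ] by (simp add: card_Un_disjoint)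
      also have "\<dots> = 2 * Suc k" using sQ Suc.prems(4,5) by simp
      finally have "2 * Suc k \<le> card {F. F facet_of Q}"
        using card_mono[OF finite_facets[OF pQ], of "?X \<union> ?Y"] by auto
      then show False using lt by linarith
    qed
    then obtain G where G: "G facet_of Q" "u \<in> G" "v \<in> G" by blast
    have sG: "simple_polytope G k" using simple_facet[OF Suc.prems(1) G(1)] by simp
    have "card {E. E facet_of G} \<le> 2 * k"
      using facet_count_facet[OF pQ G(1)] lt by arith
    moreover have "k < d" using Suc.prems(2) by simp
    moreover have "u extreme_point_of G" "v extreme_point_of G"
      using ext_facet G Suc.prems(4,5) by blast+
    ultimately obtain n where "n \<le> k" "walk G u v n" using Suc.IH[OF sG] by blast
    then show ?thesis using walk_face facet_of_imp_face_of[OF G(1)] le_SucI by blast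
  qed
qed

theorem mainTheorem5:
  fixes D :: "'a::euclidean_space set" and d :: nat and x y :: 'a
  assumes "d \<ge> 2"
    and "\<forall>d' (Q :: 'a set). 0 < d' \<and> d' < d \<and> simple_polytope Q d'
           \<and> card {F. F facet_of Q} = 2 * d' \<longrightarrow> poly_diameter Q \<le> d'"
    and "dantzig_figure D d x y"
    and "\<forall>F. F facet_of D \<longrightarrow> card {G. G facet_of F} \<le> 2 * d - 2"
  shows "poly_dist D x y \<le> d"
proof -
  have sD: "simple_polytope D d" and cD: "card {F. F facet_of D} = 2 * d"
    and xD: "x extreme_point_of D" and yD: "y extreme_point_of D"
    and nc: "\<not> (\<exists>F. F facet_of D \<and> x \<in> F \<and> y \<in> F)"
    using assms(3) by (auto simp: dantzig_figure_def)
  have pD: "polytope D" and dD: "aff_dim D = int d"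
    and sv: "\<And>v. v extreme_point_of D \<Longrightarrow> card {F. F facet_of D \<and> v \<in> F} = d"
    using sD by (auto simp: simple_polytope_def)
  have fin: "finite {F. F facet_of D}" using finite_facets[OF pD] .
  obtain y' where adj: "poly_adj D y y'" using neighbor_exists[OF pD _ yD] dD assms(1) by auto
  have y'D: "y' extreme_point_of D" and yy': "y \<noteq> y'" using adj by (auto simp: poly_adj_def)
  let ?X = "{F. F facet_of D \<and> x \<in> F}" and ?Y = "{F. F facet_of D \<and> y \<in> F}"
    and ?Y' = "{F. F facet_of D \<and> y' \<in> F}"
  have "\<exists>H. H facet_of D \<and> y' \<in> H \<and> y \<notin> H"
  proof (rule ccontr)
    assume "\<not> ?thesis"
    then have sub: "?Y' \<subseteq> ?Y" by blast
    have "card ?Y' = card ?Y" using sv y'D yD by simp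
    then have eq: "?Y' = ?Y" using card_subset_eq[OF finite_facets_P[OF pD] sub] by simp
    have "{y} face_of D" using yD by (simp add: face_of_singleton)
    moreover have "{y} \<noteq> D" using dD assms(1) by auto
    ultimately have "{y} = \<Inter>{F. F facet_of D \<and> {y} \<subseteq> F}"
      using face_of_polyhedron[OF polytope_imp_polyhedron[OF pD]] by blast
    moreover have "y' \<in> \<Inter>{F. F facet_of D \<and> {y} \<subseteq> F}" using eq by blast
    ultimately have "y' \<in> {y}" by (metis (no_types, lifting))
    then show False using yy' by simp
  qed
  then obtain H where H: "H facet_of D" "y' \<in> H" "y \<notin> H" by blast
  have "?X \<union> ?Y = {F. F facet_of D}"
  proof (rule card_subset_eq[OF fin])
    show "?X \<union> ?Y \<subseteq> {F. F facet_of D}" by blast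
    have "?X \<inter> ?Y = {}" using nc by blast
    then have "card (?X \<union> ?Y) = card ?X + card ?Y"
      using finite_facets_P[OF pD] by (simp add: card_Un_disjoint)
    then show "card (?X \<union> ?Y) = card {F. F facet_of D}" using sv xD yD cD by simp
  qed
  then have xH: "x \<in> H" using H by blast
  have sH: "simple_polytope H (d - 1)" using simple_facet[OF sD H(1)] by simp
  have "card {F. F facet_of H} \<le> 2 * (d - 1)" using assms(4) H(1) by auto
  moreover have "d - 1 < d" using assms(1) by simp
  moreover have "x extreme_point_of H" "y' extreme_point_of H"
    using ext_facet H xD y'D xH by blast+
  ultimately obtain n where n: "n \<le> d - 1" "walk H x y' n"
    using kw[OF assms(2) sH] by blast
  have "walk D x y' n" using walk_face[OF n(2) facet_of_imp_face_of[OF H(1)]] .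
  then have "walk D x y (n + 1)" using walk_trans walk_edge[OF poly_adj_sym[OF adj]] by blast
  then have "poly_dist D x y \<le> n + 1" by (rule walk_dist)
  then show ?thesis using n(1) assms(1) by linarith
qed

end
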